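(* Let $n=2k+1$ for an integer $k\ge 2$, and let $\sigma_n$ be the multiset consisting of $k$ copies of $1$ and $k+1$ copies of $-k/(k+1)$. Then $\sum_{\lambda\in\sigma_n}\lambda=0$ (counted with multiplicity), and $\sigma_n$ is not realizable.
   Context: A multiset $\sigma=\{\lambda_1,\dots,\lambda_n\}$ of complex numbers is realizable if there exists an $n\times n$ matrix with all entries real and nonnegative whose eigenvalues, counted with algebraic multiplicity, are exactly $\lambda_1,\dots,\lambda_n$. *)

theory Defs
  imports "Jordan_Normal_Form.Char_Poly" "HOL-Library.Multiset"
begin

text \<open>A multiset of complex numbers (with multiplicity) is realizable if it is
  exactly the multiset of eigenvalues (with algebraic multiplicity) of a square
  real matrix with nonnegative entries, i.e. the complex characteristic polynomial
  of that matrix is the product of (X - lambda) over the multiset.\<close>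

definition realizable :: "complex multiset \<Rightarrow> bool" where
  "realizable \<sigma> \<longleftrightarrow>
     (\<exists>A :: real mat. A \<in> carrier_mat (size \<sigma>) (size \<sigma>) \<and>
        (\<forall>i j. i < size \<sigma> \<longrightarrow> j < size \<sigma> \<longrightarrow> A $$ (i, j) \<ge> 0) \<and>
        char_poly (map_mat complex_of_real A) = (\<Prod>x\<in>#\<sigma>. [:-x, 1:]))"

definition sigma_n :: "nat \<Rightarrow> complex multiset" where
  "sigma_n k = replicate_mset k 1 + replicate_mset (k + 1) (- (of_nat k / of_nat (k + 1)))"

end

theory Submission
  imports Defs "Jordan_Normal_Form.Schur_Decomposition"
begin


lemma mult_entry:
  assumes "X \<in> carrier_mat a s" "Y \<in> carrier_mat s b" "i < a" "j < b"
  shows "(X * Y) $$ (i,j) = (\<Sum>l = 0..<s. X $$ (i,l) * Y $$ (l,j))"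
  using assms by (subst index_mult_mat) (auto simp: scalar_prod_def intro!: sum.cong)

definition tr :: "'a::comm_ring_1 mat \<Rightarrow> 'a" where
  "tr B = (\<Sum>i = 0..<dim_row B. B $$ (i,i))"

lemma tr_mult_comm:
  assumes "X \<in> carrier_mat s s" "Y \<in> carrier_mat s s"
  shows "tr (X * Y) = tr (Y * X)"
proof -
  have "tr (X * Y) = (\<Sum>i = 0..<s. \<Sum>l = 0..<s. X $$ (i,l) * Y $$ (l,i))"
    unfolding tr_def using assms by (intro sum.cong) (auto simp del: index_mult_mat(1) intro!: mult_entry[OF assms])
  also have "\<dots> = (\<Sum>l = 0..<s. \<Sum>i = 0..<s. Y $$ (l,i) * X $$ (i,l))"
    by (subst sum.swap) (simp add: mult.commute)
  also have "\<dots> = tr (Y * X)"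
    unfolding tr_def using assms by (intro sum.cong) (auto simp del: index_mult_mat(1) intro!: mult_entry[OF assms(2,1), symmetric])
  finally show ?thesis .
qed

lemma tr_sim:
  assumes "P \<in> carrier_mat s s" "T \<in> carrier_mat s s" "Q \<in> carrier_mat s s" "Q * P = 1\<^sub>m s"
  shows "tr (P * T * Q) = tr T"
proof -
  have "tr (P * T * Q) = tr (Q * (P * T))"
    using assms by (intro tr_mult_comm) auto
  also have "Q * (P * T) = T" using assms
    by (subst assoc_mult_mat[symmetric, of Q s s P s T s]) auto
  finally show ?thesis .
qed

lemma ut_mult:
  assumes X: "X \<in> carrier_mat s s" and Y: "Y \<in> carrier_mat s s"
    and ux: "upper_triangular X" and uy: "upper_triangular Y"
  shows "upper_triangular (X * Y) \<and> (\<forall>i<s. (X * Y) $$ (i,i) = X $$ (i,i) * Y $$ (i,i))"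
proof (intro conjI allI impI)
  show "upper_triangular (X * Y)"
  proof (rule upper_triangularI)
    fix i j assume ij: "j < i" "i < dim_row (X * Y)"
    hence "(X * Y) $$ (i,j) = (\<Sum>l = 0..<s. X $$ (i,l) * Y $$ (l,j))"
      using X Y by (intro mult_entry[OF X Y]) auto
    also have "\<dots> = 0"
    proof (rule sum.neutral, intro ballI)
      fix l assume l: "l \<in> {0..<s}"
      show "X $$ (i,l) * Y $$ (l,j) = 0"
      proof (cases "l < i")
        case True thus ?thesis using upper_triangularD[OF ux, of l i] X ij by auto
      next
        case False thus ?thesis using upper_triangularD[OF uy, of j l] Y ij l by auto
      qed
    qed
    finally show "(X * Y) $$ (i,j) = 0" .
  qed
next
  fix i assume i: "i < s"
  have "(X * Y) $$ (i,i) = (\<Sum>l = 0..<s. X $$ (i,l) * Y $$ (l,i))"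
    using X Y i by (intro mult_entry[OF X Y]) auto
  also have "\<dots> = (\<Sum>l\<in>{i}. X $$ (i,l) * Y $$ (l,i))"
  proof (rule sum.mono_neutral_right)
    show "\<forall>l\<in>{0..<s} - {i}. X $$ (i,l) * Y $$ (l,i) = 0"
    proof
      fix l assume l: "l \<in> {0..<s} - {i}"
      show "X $$ (i,l) * Y $$ (l,i) = 0"
      proof (cases "l < i")
        case True thus ?thesis using upper_triangularD[OF ux, of l i] X i by auto
      next
        case False thus ?thesis using upper_triangularD[OF uy, of i l] Y i l by auto
      qed
    qed
  qed (use i in auto)
  also have "\<dots> = X $$ (i,i) * Y $$ (i,i)" by simp
  finally show "(X * Y) $$ (i,i) = X $$ (i,i) * Y $$ (i,i)" .
qed

lemma ut_pow:
  assumes X: "X \<in> carrier_mat s s" and ux: "upper_triangular X"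
  shows "upper_triangular (X ^\<^sub>m m) \<and> (\<forall>i<s. (X ^\<^sub>m m) $$ (i,i) = X $$ (i,i) ^ m)"
proof (induct m)
  case 0 thus ?case using X by auto
next
  case (Suc m)
  have "X ^\<^sub>m m \<in> carrier_mat s s" using X by simp
  from ut_mult[OF this X] Suc ux show ?case by (auto simp del: power_Suc simp add: power_Suc2)
qed


lemma mult_vec_entry:
  assumes "X \<in> carrier_mat a s" "v \<in> carrier_vec s" "i < a"
  shows "(X *\<^sub>v v) $ i = (\<Sum>l = 0..<s. X $$ (i,l) * v $ l)"
  using assms by (subst index_mult_mat_vec) (auto simp: scalar_prod_def intro!: sum.cong)

lemma mat_eq_by_vecs:
  fixes G :: "'a::comm_ring_1 mat"
  assumes G: "G \<in> carrier_mat s s" and z: "\<And>j. j < s \<Longrightarrow> G *\<^sub>v unit_vec s j = 0\<^sub>v s"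
  shows "G = 0\<^sub>m s s"
proof (rule eq_matI)
  fix i j assume ij: "i < dim_row (0\<^sub>m s s)" "j < dim_col (0\<^sub>m s s)"
  hence "(G *\<^sub>v unit_vec s j) $ i = (\<Sum>l = 0..<s. G $$ (i,l) * unit_vec s j $ l)"
    using G by (intro mult_vec_entry) auto
  also have "\<dots> = (\<Sum>l = 0..<s. if l = j then G $$ (i,l) else 0)"
    by (intro sum.cong) (auto simp: unit_vec_def)
  also have "\<dots> = G $$ (i,j)" using ij by simp
  finally show "G $$ (i,j) = 0\<^sub>m s s $$ (i,j)" using z[of j] ij by simp
qed (use G in auto)

lemma tri_CH:
  fixes T :: "'a::comm_ring_1 mat"
  assumes T: "T \<in> carrier_mat s s" and ut: "upper_triangular T" and p: "p \<le> s"
    and d0: "\<And>i. i < p \<Longrightarrow> T $$ (i,i) = 0" and d1: "\<And>i. p \<le> i \<Longrightarrow> i < s \<Longrightarrow> T $$ (i,i) = 1"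
  shows "T ^\<^sub>m p * (T - 1\<^sub>m s) ^\<^sub>m (s - p) = 0\<^sub>m s s"
proof -
  define G where "G j = T ^\<^sub>m (min j p) * (T - 1\<^sub>m s) ^\<^sub>m (j - p)" for j
  define F where "F j = (if j < p then T else T - 1\<^sub>m s)" for j
  have T1: "T - 1\<^sub>m s \<in> carrier_mat s s" using T by (auto simp: minus_carrier_mat)
  have Gc: "G j \<in> carrier_mat s s" for j unfolding G_def using T T1 by auto
  have Fc: "F j \<in> carrier_mat s s" for j unfolding F_def using T T1 by auto
  have Gstep: "G (Suc j) = G j * F j" for j
  proof (cases "j < p")
    case True
    hence "G (Suc j) = T ^\<^sub>m (Suc j) * 1\<^sub>m s" "G j = T ^\<^sub>m j * 1\<^sub>m s"
      unfolding G_def using T1 by auto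
    thus ?thesis using True T unfolding F_def by simp
  next
    case False
    hence "G (Suc j) = T ^\<^sub>m p * ((T - 1\<^sub>m s) ^\<^sub>m (j - p) * (T - 1\<^sub>m s))"
      "G j = T ^\<^sub>m p * (T - 1\<^sub>m s) ^\<^sub>m (j - p)"
      unfolding G_def by (auto simp: Suc_diff_le)
    thus ?thesis using False T T1 unfolding F_def
      by (simp add: assoc_mult_mat[of _ s s _ s _ s])
  qed
  have key: "\<forall>v. v \<in> carrier_vec s \<longrightarrow> (\<forall>l. j \<le> l \<longrightarrow> l < s \<longrightarrow> v $ l = 0) \<longrightarrow> G j *\<^sub>v v = 0\<^sub>v s"
    if "j \<le> s" for j
    using that
  proof (induct j)
    case 0
    show ?case
    proof (intro allI impI)
      fix v :: "'a vec" assume v: "v \<in> carrier_vec s" "\<forall>l. 0 \<le> l \<longrightarrow> l < s \<longrightarrow> v $ l = 0"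
      hence "v = 0\<^sub>v s" by (intro eq_vecI) auto
      thus "G 0 *\<^sub>v v = 0\<^sub>v s" using Gc[of 0] by (intro eq_vecI) auto
    qed
  next
    case (Suc j)
    show ?case
    proof (intro allI impI)
      fix v :: "'a vec" assume v: "v \<in> carrier_vec s" "\<forall>l. Suc j \<le> l \<longrightarrow> l < s \<longrightarrow> v $ l = 0"
      define w where "w = F j *\<^sub>v v"
      have w: "w \<in> carrier_vec s" unfolding w_def using Fc[of j] v by auto
      have wz: "w $ l = 0" if l: "j \<le> l" "l < s" for l
      proof -
        have "w $ l = (\<Sum>m = 0..<s. F j $$ (l,m) * v $ m)"
          unfolding w_def using Fc[of j] v l by (intro mult_vec_entry) auto
        also have "\<dots> = 0"
        proof (rule sum.neutral, intro ballI)
          fix m assume m: "m \<in> {0..<s}"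
          have Fe: "F j $$ (l,m) = T $$ (l,m) - (if j < p then 0 else (if l = m then 1 else 0))"
            unfolding F_def using T l m by auto
          show "F j $$ (l,m) * v $ m = 0"
          proof (cases "m < l")
            case True
            thus ?thesis using upper_triangularD[OF ut, of m l] T l Fe by auto
          next
            case False
            show ?thesis
            proof (cases "m = j")
              case True
              with False l have "l = j" by auto
              thus ?thesis using Fe True d0 d1 l p by auto
            next
              case False2: False
              with False l have "Suc j \<le> m" by auto
              thus ?thesis using v m by auto
            qed
          qed
        qed
        finally show ?thesis .
      qed
      have "G (Suc j) *\<^sub>v v = G j *\<^sub>v w"
        unfolding Gstep w_def using Gc[of j] Fc[of j] v by (intro assoc_mult_mat_vec) auto
      also have "\<dots> = 0\<^sub>v s" using Suc(1) Suc(2) w wz by auto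
      finally show "G (Suc j) *\<^sub>v v = 0\<^sub>v s" .
    qed
  qed
  have "G s = 0\<^sub>m s s"
  proof (rule mat_eq_by_vecs[OF Gc])
    fix j assume "j < s"
    thus "G s *\<^sub>v unit_vec s j = 0\<^sub>v s" using key[of s] by (auto simp: unit_vec_def)
  qed
  moreover have "G s = T ^\<^sub>m p * (T - 1\<^sub>m s) ^\<^sub>m (s - p)" unfolding G_def using p by simp
  ultimately show ?thesis by simp
qed



lemma pos_idem_tr:
  fixes E :: "real mat"
  assumes E: "E \<in> carrier_mat s s" and pos: "\<And>i j. i < s \<Longrightarrow> j < s \<Longrightarrow> E $$ (i,j) > 0"
    and idem: "E * E = E" and s: "s > 0"
  shows "tr E = 1"
proof -
  have ie: "(\<Sum>l = 0..<s. E $$ (u,l) * E $$ (l,j)) = E $$ (u,j)" if "u < s" "j < s" for u j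
    using mult_entry[OF E E that] idem by simp
  have prp: "\<exists>t. \<forall>l<s. E $$ (l,j) = t * E $$ (l,0)" if j: "j < s" for j
  proof -
    define f where "f u = E $$ (u,j) / E $$ (u,0)" for u
    define t where "t = Min (f ` {0..<s})"
    have "t \<in> f ` {0..<s}" unfolding t_def using s by (intro Min_in) auto
    then obtain u0 where u0: "u0 < s" "t = f u0" by auto
    have tle: "t \<le> f u" if "u < s" for u unfolding t_def using that by (intro Min_le) auto
    define y where "y l = E $$ (l,j) - t * E $$ (l,0)" for l
    have y0: "y l \<ge> 0" if l: "l < s" for l
    proof -
      have "t \<le> E $$ (l,j) / E $$ (l,0)" using tle[OF l] unfolding f_def .
      hence "t * E $$ (l,0) \<le> E $$ (l,j)" using pos[OF l, of 0] s by (simp add: pos_le_divide_eq)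
      thus ?thesis unfolding y_def by simp
    qed
    have yu0: "y u0 = 0" unfolding y_def u0 f_def using pos[OF u0(1), of 0] s by simp
    have "(\<Sum>l = 0..<s. E $$ (u0,l) * y l) =
        (\<Sum>l = 0..<s. E $$ (u0,l) * E $$ (l,j)) - t * (\<Sum>l = 0..<s. E $$ (u0,l) * E $$ (l,0))"
      unfolding y_def by (simp add: sum_subtractf sum_distrib_left algebra_simps)
    also have "\<dots> = y u0" unfolding y_def using ie[OF u0(1) j] ie[OF u0(1), of 0] s by simp
    finally have sum0: "(\<Sum>l = 0..<s. E $$ (u0,l) * y l) = 0" using yu0 by simp
    have "\<forall>l\<in>{0..<s}. E $$ (u0,l) * y l = 0"
      using sum0 by (subst (asm) sum_nonneg_eq_0_iff) (auto intro!: mult_nonneg_nonneg y0 less_imp_le[OF pos[OF u0(1)]])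
    have "\<forall>l<s. y l = 0"
    proof (intro allI impI)
      fix l assume l: "l < s"
      have "E $$ (u0,l) * y l = 0" using \<open>\<forall>l\<in>{0..<s}. E $$ (u0,l) * y l = 0\<close> l by auto
      moreover have "E $$ (u0,l) > 0" using pos[OF u0(1) l] .
      ultimately show "y l = 0" by simp
    qed
    thus ?thesis unfolding y_def by auto
  qed
  hence "\<forall>j. \<exists>t. j < s \<longrightarrow> (\<forall>l<s. E $$ (l,j) = t * E $$ (l,0))" by blast
  then obtain t where t: "\<And>j l. j < s \<Longrightarrow> l < s \<Longrightarrow> E $$ (l,j) = t j * E $$ (l,0)"
    by metis
  define \<sigma> where "\<sigma> = (\<Sum>l = 0..<s. t l * E $$ (l,0))"
  have "E $$ (0,0) = (\<Sum>l = 0..<s. E $$ (0,l) * E $$ (l,0))" using ie[of 0 0] s by simp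
  also have "\<dots> = (\<Sum>l = 0..<s. E $$ (0,0) * (t l * E $$ (l,0)))"
  proof (intro sum.cong refl)
    fix l assume "l \<in> {0..<s}"
    hence "E $$ (0,l) = t l * E $$ (0,0)" using t[of l 0] s by auto
    thus "E $$ (0,l) * E $$ (l,0) = E $$ (0,0) * (t l * E $$ (l,0))" by simp
  qed
  also have "\<dots> = E $$ (0,0) * \<sigma>" unfolding \<sigma>_def by (simp add: sum_distrib_left)
  finally have "\<sigma> = 1" using pos[of 0 0] s by simp
  have "tr E = (\<Sum>u = 0..<s. E $$ (u,u))" unfolding tr_def using E by simp
  also have "\<dots> = \<sigma>" unfolding \<sigma>_def
  proof (intro sum.cong refl)
    fix u assume "u \<in> {0..<s}"
    thus "E $$ (u,u) = t u * E $$ (u,0)" using t[of u u] by auto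
  qed
  finally show ?thesis using \<open>\<sigma> = 1\<close> by simp
qed


lemma bounded_stab:
  fixes W :: "real mat"
  assumes W: "W \<in> carrier_mat s s"
    and bnd: "\<And>m i j. i < s \<Longrightarrow> j < s \<Longrightarrow> \<bar>(W ^\<^sub>m m) $$ (i,j)\<bar> \<le> K"
    and CH: "W ^\<^sub>m p * (W - 1\<^sub>m s) ^\<^sub>m q = 0\<^sub>m s s"
  shows "W ^\<^sub>m Suc p = W ^\<^sub>m p"
  using CH
proof (induct q)
  case 0
  hence "W ^\<^sub>m p = 0\<^sub>m s s" using W by simp
  thus ?case using W by simp
next
  case (Suc q)
  have W1: "W - 1\<^sub>m s \<in> carrier_mat s s" using W by (auto simp: minus_carrier_mat)
  define X where "X = W ^\<^sub>m p * (W - 1\<^sub>m s) ^\<^sub>m q"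
  have Xc: "X \<in> carrier_mat s s" unfolding X_def using W W1 by auto
  have "X * (W - 1\<^sub>m s) = 0\<^sub>m s s"
    using Suc(2) W W1 unfolding X_def by (simp add: assoc_mult_mat[of _ s s _ s _ s])
  hence XW0: "X * W - X = 0\<^sub>m s s"
    using Xc W by (subst (asm) mult_minus_distrib_mat[of _ s s]) (auto simp: minus_carrier_mat)
  have XW: "X * W = X"
  proof (rule eq_matI)
    fix i j assume "i < dim_row X" "j < dim_col X"
    thus "(X * W) $$ (i,j) = X $$ (i,j)"
      using arg_cong[OF XW0, of "\<lambda>A. A $$ (i,j)"] Xc W by simp
  qed (use Xc W in auto)
  have XWe: "(X * W) $$ (i,j) = X $$ (i,j)" if "i < s" "j < s" for i j using XW by simp
  show ?case
  proof (cases q)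
    case 0
    thus ?thesis using XW W unfolding X_def by simp
  next
    case (Suc q')
    define Y where "Y = W ^\<^sub>m p * (W - 1\<^sub>m s) ^\<^sub>m q'"
    have Yc: "Y \<in> carrier_mat s s" unfolding Y_def using W W1 by auto
    have "X = Y * (W - 1\<^sub>m s)"
      unfolding X_def Y_def Suc using W W1 by (simp add: assoc_mult_mat[of _ s s _ s _ s])
    also have "\<dots> = Y * W - Y" using Yc W by (subst mult_minus_distrib_mat[of _ s s]) auto
    finally have XY: "X = Y * W - Y" .
    have YWe: "(Y * W) $$ (i,j) = Y $$ (i,j) + X $$ (i,j)" if "i < s" "j < s" for i j
      using that Yc W by (subst XY) auto
    have pw: "(Y * W ^\<^sub>m m) $$ (u,v) = Y $$ (u,v) + real m * X $$ (u,v)" if "u < s" "v < s" for m u v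
      using that
    proof (induct m arbitrary: v)
      case 0 thus ?case using Yc W by simp
    next
      case (Suc m)
      have "Y * W ^\<^sub>m Suc m = (Y * W ^\<^sub>m m) * W"
        using Yc W by (simp add: assoc_mult_mat[of _ s s _ s _ s])
      hence "(Y * W ^\<^sub>m Suc m) $$ (u,v) = ((Y * W ^\<^sub>m m) * W) $$ (u,v)" by simp
      also have "\<dots> = (\<Sum>l = 0..<s. (Y * W ^\<^sub>m m) $$ (u,l) * W $$ (l,v))"
        using Yc W Suc by (intro mult_entry[of _ s s _ s]) auto
      also have "\<dots> = (\<Sum>l = 0..<s. (Y $$ (u,l) + real m * X $$ (u,l)) * W $$ (l,v))"
        using Suc by (intro sum.cong) auto
      also have "\<dots> = (\<Sum>l = 0..<s. Y $$ (u,l) * W $$ (l,v)) + real m * (\<Sum>l = 0..<s. X $$ (u,l) * W $$ (l,v))"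
        by (simp add: algebra_simps sum.distrib sum_distrib_left)
      also have "\<dots> = (Y * W) $$ (u,v) + real m * (X * W) $$ (u,v)"
        using mult_entry[OF Yc W Suc(2,3)] mult_entry[OF Xc W Suc(2,3)] by simp
      also have "\<dots> = Y $$ (u,v) + real (Suc m) * X $$ (u,v)"
        using YWe XWe Suc by (simp add: algebra_simps)
      finally show ?case .
    qed
    have X0: "X $$ (u,v) = 0" if uv: "u < s" "v < s" for u v
    proof (rule ccontr)
      assume nz: "X $$ (u,v) \<noteq> 0"
      define C where "C = (\<Sum>l = 0..<s. \<bar>Y $$ (u,l)\<bar> * K)"
      have bd: "\<bar>Y $$ (u,v) + real m * X $$ (u,v)\<bar> \<le> C" for m
      proof -
        have "\<bar>Y $$ (u,v) + real m * X $$ (u,v)\<bar> = \<bar>\<Sum>l = 0..<s. Y $$ (u,l) * (W ^\<^sub>m m) $$ (l,v)\<bar>"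
          using pw[OF uv, of m] mult_entry[OF Yc _ uv, of "W ^\<^sub>m m"] W by simp
        also have "\<dots> \<le> (\<Sum>l = 0..<s. \<bar>Y $$ (u,l) * (W ^\<^sub>m m) $$ (l,v)\<bar>)" by (rule sum_abs)
        also have "\<dots> \<le> C" unfolding C_def
          by (intro sum_mono) (auto simp: abs_mult intro!: mult_left_mono bnd uv)
        finally show ?thesis .
      qed
      obtain m :: nat where m: "(C + \<bar>Y $$ (u,v)\<bar>) / \<bar>X $$ (u,v)\<bar> < real m"
        using reals_Archimedean2 by blast
      hence "C + \<bar>Y $$ (u,v)\<bar> < real m * \<bar>X $$ (u,v)\<bar>" using nz by (simp add: divide_less_eq)
      moreover have "real m * \<bar>X $$ (u,v)\<bar> \<le> \<bar>Y $$ (u,v) + real m * X $$ (u,v)\<bar> + \<bar>Y $$ (u,v)\<bar>"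
        by (simp add: abs_mult[symmetric])
      ultimately show False using bd[of m] by linarith
    qed
    have "X = 0\<^sub>m s s" using Xc X0 by (intro eq_matI) auto
    thus ?thesis using Suc.hyps unfolding X_def by simp
  qed
qed



lemma pow_add_mat:
  assumes X: "X \<in> carrier_mat n n"
  shows "X ^\<^sub>m (a + b) = X ^\<^sub>m a * X ^\<^sub>m b"
proof (induct b)
  case 0 thus ?case using X by simp
next
  case (Suc b)
  have "X ^\<^sub>m (a + Suc b) = (X ^\<^sub>m a * X ^\<^sub>m b) * X" using Suc by simp
  also have "\<dots> = X ^\<^sub>m a * (X ^\<^sub>m b * X)" using X by (simp add: assoc_mult_mat[of _ n n _ n _ n])
  finally show ?case by simp
qed

definition restr :: "(nat \<Rightarrow> nat) \<Rightarrow> nat \<Rightarrow> 'a mat \<Rightarrow> 'a mat" where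
  "restr f s X = mat s s (\<lambda>(i,j). X $$ (f i, f j))"

definition clmat :: "nat \<Rightarrow> nat set \<Rightarrow> 'a::zero mat \<Rightarrow> bool" where
  "clmat n S X \<longleftrightarrow> S \<subseteq> {0..<n} \<and> X \<in> carrier_mat n n \<and> (\<forall>i\<in>S. \<forall>j<n. j \<notin> S \<longrightarrow> X $$ (i,j) = 0)"

lemma bij_f:
  fixes f :: "nat \<Rightarrow> nat"
  assumes "bij_betw f {0..<s} S" "S \<subseteq> {0..<n}" "i < s"
  shows "f i \<in> S" "f i < n"
proof -
  show "f i \<in> S" using bij_betwE[OF assms(1)] assms(3) by auto
  thus "f i < n" using assms(2) by auto
qed

lemma restr_carrier[simp]: "restr f s X \<in> carrier_mat s s"
  unfolding restr_def by simp

lemma restr_dim[simp]: "dim_row (restr f s X) = s" "dim_col (restr f s X) = s"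
  unfolding restr_def by simp_all

lemma restr_index[simp]: "i < s \<Longrightarrow> j < s \<Longrightarrow> restr f s X $$ (i,j) = X $$ (f i, f j)"
  unfolding restr_def by simp

lemma clmat_mult:
  fixes X Y :: "'a::comm_ring_1 mat"
  assumes cx: "clmat n S X" and cy: "clmat n S Y"
  shows "clmat n S (X * Y)"
proof -
  have X: "X \<in> carrier_mat n n" and Y: "Y \<in> carrier_mat n n" and S: "S \<subseteq> {0..<n}"
    using cx cy unfolding clmat_def by auto
  have "(X * Y) $$ (i,j) = 0" if i: "i \<in> S" and j: "j < n" "j \<notin> S" for i j
  proof -
    have "i < n" using S i by auto
    hence "(X * Y) $$ (i,j) = (\<Sum>l = 0..<n. X $$ (i,l) * Y $$ (l,j))" using X Y j by (intro mult_entry) auto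
    also have "\<dots> = 0"
    proof (rule sum.neutral, intro ballI)
      fix l assume l: "l \<in> {0..<n}"
      show "X $$ (i,l) * Y $$ (l,j) = 0"
      proof (cases "l \<in> S")
        case True thus ?thesis using cy j unfolding clmat_def by auto
      next
        case False thus ?thesis using cx i l unfolding clmat_def by auto
      qed
    qed
    finally show ?thesis .
  qed
  thus ?thesis using X Y S unfolding clmat_def by auto
qed

lemma clmat_one: "S \<subseteq> {0..<n} \<Longrightarrow> clmat n S (1\<^sub>m n)"
  unfolding clmat_def by auto

lemma clmat_pow:
  fixes X :: "'a::comm_ring_1 mat"
  assumes "clmat n S X" shows "clmat n S (X ^\<^sub>m m)"
proof (induct m)
  case 0 thus ?case using assms clmat_one[of S n] unfolding clmat_def by auto
next
  case (Suc m) thus ?case using clmat_mult[OF Suc assms] by simp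
qed

lemma clmat_minus:
  fixes X Y :: "'a::comm_ring_1 mat"
  assumes cx: "clmat n S X" and cy: "clmat n S Y"
  shows "clmat n S (X - Y)"
  using assms unfolding clmat_def by auto

lemma restr_mult:
  fixes X Y :: "'a::comm_ring_1 mat"
  assumes f: "bij_betw f {0..<s} S" and cx: "clmat n S X" and Y: "Y \<in> carrier_mat n n"
  shows "restr f s (X * Y) = restr f s X * restr f s Y"
proof (rule eq_matI)
  have X: "X \<in> carrier_mat n n" and S: "S \<subseteq> {0..<n}" using cx unfolding clmat_def by auto
  fix i j assume ij: "i < dim_row (restr f s X * restr f s Y)" "j < dim_col (restr f s X * restr f s Y)"
  hence i: "i < s" and j: "j < s" by auto
  have fi: "f i < n" "f j < n" "f i \<in> S" using bij_f[OF f S] i j by auto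
  have "restr f s (X * Y) $$ (i,j) = (X * Y) $$ (f i, f j)" using i j by simp
  also have "\<dots> = (\<Sum>l = 0..<n. X $$ (f i,l) * Y $$ (l,f j))" using X Y fi by (intro mult_entry) auto
  also have "\<dots> = (\<Sum>l\<in>S. X $$ (f i,l) * Y $$ (l,f j))"
    using S cx fi unfolding clmat_def by (intro sum.mono_neutral_right) auto
  also have "\<dots> = (\<Sum>l' = 0..<s. X $$ (f i,f l') * Y $$ (f l',f j))"
    using sum.reindex_bij_betw[OF f, of "\<lambda>l. X $$ (f i,l) * Y $$ (l,f j)"] by simp
  also have "\<dots> = (restr f s X * restr f s Y) $$ (i,j)"
    using i j by (subst mult_entry[of _ s s _ s]) auto
  finally show "restr f s (X * Y) $$ (i,j) = (restr f s X * restr f s Y) $$ (i,j)" .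
qed simp_all

lemma restr_one:
  assumes f: "bij_betw f {0..<s} S" and S: "S \<subseteq> {0..<n}"
  shows "restr f s (1\<^sub>m n) = (1\<^sub>m s :: 'a::comm_ring_1 mat)"
proof (rule eq_matI)
  fix i j assume "i < dim_row (1\<^sub>m s :: 'a mat)" "j < dim_col (1\<^sub>m s :: 'a mat)"
  hence ij: "i < s" "j < s" by auto
  have fi: "f i < n" "f j < n" using bij_f[OF f S] ij by auto
  have "f i = f j \<longleftrightarrow> i = j" using f ij unfolding bij_betw_def by (auto dest: inj_onD)
  thus "restr f s (1\<^sub>m n) $$ (i,j) = (1\<^sub>m s :: 'a mat) $$ (i,j)" using ij fi by simp
qed simp_all

lemma restr_minus:
  fixes X Y :: "'a::comm_ring_1 mat"
  assumes f: "bij_betw f {0..<s} S" and S: "S \<subseteq> {0..<n}" and X: "X \<in> carrier_mat n n" and Y: "Y \<in> carrier_mat n n"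
  shows "restr f s (X - Y) = restr f s X - restr f s Y"
proof (rule eq_matI)
  fix i j assume "i < dim_row (restr f s X - restr f s Y)" "j < dim_col (restr f s X - restr f s Y)"
  hence ij: "i < s" "j < s" by auto
  have fi: "f i < n" "f j < n" using bij_f[OF f S] ij by auto
  show "restr f s (X - Y) $$ (i,j) = (restr f s X - restr f s Y) $$ (i,j)" using ij fi X Y by simp
qed simp_all

lemma restr_pow:
  fixes X :: "'a::comm_ring_1 mat"
  assumes f: "bij_betw f {0..<s} S" and cx: "clmat n S X"
  shows "restr f s (X ^\<^sub>m m) = restr f s X ^\<^sub>m m"
proof (induct m)
  case 0
  have "S \<subseteq> {0..<n}" "X \<in> carrier_mat n n" using cx unfolding clmat_def by auto
  thus ?case using restr_one[OF f] by simp
next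
  case (Suc m)
  have X: "X \<in> carrier_mat n n" using cx unfolding clmat_def by auto
  have "restr f s (X ^\<^sub>m Suc m) = restr f s (X ^\<^sub>m m * X)" by simp
  also have "\<dots> = restr f s (X ^\<^sub>m m) * restr f s X"
    by (rule restr_mult[OF f clmat_pow[OF cx] X])
  finally show ?case using Suc by simp
qed



lemma sim_prod:
  fixes P Q X Y :: "'a::comm_ring_1 mat"
  assumes P: "P \<in> carrier_mat n n" and Q: "Q \<in> carrier_mat n n" and X: "X \<in> carrier_mat n n"
    and Y: "Y \<in> carrier_mat n n" and QP: "Q * P = 1\<^sub>m n"
  shows "(P * X * Q) * (P * Y * Q) = P * (X * Y) * Q"
proof -
  have QPZ: "Q * (P * Z) = Z" if "Z \<in> carrier_mat n n" for Z
    using that P Q QP by (subst assoc_mult_mat[symmetric, of Q n n P n Z n]) auto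
  show ?thesis using P Q X Y QPZ[OF mult_carrier_mat[OF Y Q]]
    by (simp add: assoc_mult_mat[of _ n n _ n _ n])
qed

lemma nonneg_mult:
  fixes X Y :: "real mat"
  assumes X: "X \<in> carrier_mat n n" and Y: "Y \<in> carrier_mat n n"
    and nx: "\<And>i j. i < n \<Longrightarrow> j < n \<Longrightarrow> X $$ (i,j) \<ge> 0"
    and ny: "\<And>i j. i < n \<Longrightarrow> j < n \<Longrightarrow> Y $$ (i,j) \<ge> 0"
    and ij: "i < n" "j < n" and l: "l < n"
  shows "(X * Y) $$ (i,j) \<ge> X $$ (i,l) * Y $$ (l,j)"
proof -
  have "(X * Y) $$ (i,j) = (\<Sum>m = 0..<n. X $$ (i,m) * Y $$ (m,j))" using X Y ij by (intro mult_entry) auto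
  also have "\<dots> \<ge> X $$ (i,l) * Y $$ (l,j)"
    by (rule member_le_sum) (use l nx ny ij in auto)
  finally show ?thesis .
qed

lemma nonneg_pow:
  fixes X :: "real mat"
  assumes X: "X \<in> carrier_mat n n"
    and nx: "\<And>i j. i < n \<Longrightarrow> j < n \<Longrightarrow> X $$ (i,j) \<ge> 0"
  shows "i < n \<Longrightarrow> j < n \<Longrightarrow> (X ^\<^sub>m m) $$ (i,j) \<ge> 0"
proof (induct m arbitrary: i j)
  case 0 thus ?case using X by simp
next
  case (Suc m)
  have "(X ^\<^sub>m m * X) $$ (i,j) = (\<Sum>l = 0..<n. (X ^\<^sub>m m) $$ (i,l) * X $$ (l,j))"
    using X Suc by (intro mult_entry) auto
  also have "\<dots> \<ge> 0" using Suc nx by (intro sum_nonneg) auto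
  finally show ?case by simp
qed

lemma uniform_witness:
  fixes P :: "'a \<Rightarrow> nat \<Rightarrow> bool"
  assumes "finite X" "\<forall>x\<in>X. \<exists>m. P x m" "\<And>x m m'. P x m \<Longrightarrow> m \<le> m' \<Longrightarrow> P x m'"
  shows "\<exists>m0. \<forall>x\<in>X. \<forall>m\<ge>m0. P x m"
  using assms(1,2)
proof (induct X rule: finite_induct)
  case empty thus ?case by auto
next
  case (insert x F)
  then obtain m0 where m0: "\<forall>y\<in>F. \<forall>m\<ge>m0. P y m" by auto
  obtain mx where mx: "P x mx" using insert by auto
  have "\<forall>y\<in>insert x F. \<forall>m\<ge>max m0 mx. P y m"
  proof (intro ballI allI impI)
    fix y m assume y: "y \<in> insert x F" and m: "max m0 mx \<le> m"
    show "P y m"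
    proof (cases "y = x")
      case True
      have "mx \<le> m" using m by simp
      thus ?thesis using assms(3)[OF mx] True by blast
    next
      case False thus ?thesis using y m0 m by auto
    qed
  qed
  thus ?case by blast
qed

lemma sum_es:
  fixes c :: real
  assumes "c = real k / real (k+1)"
  shows "sum_list (replicate (k+1) (- complex_of_real c) @ replicate k 1) = 0"
proof -
  have "real (k+1) * c = real k" using assms by simp
  hence "complex_of_real (real (k+1) * c) = of_nat k" by simp
  thus ?thesis by (simp add: sum_list_replicate algebra_simps)
qed



lemma eig01:
  fixes W :: "real mat"
  assumes Wc: "W \<in> carrier_mat s s" and CH: "W ^\<^sub>m p * (W - 1\<^sub>m s) ^\<^sub>m q = 0\<^sub>m s s"
    and m: "m \<ge> 1"
  shows "tr (W ^\<^sub>m m) = tr W"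
proof -
  define WC where "WC = map_mat complex_of_real W"
  have WCc: "WC \<in> carrier_mat s s" unfolding WC_def using Wc by simp
  have W1c: "W - 1\<^sub>m s \<in> carrier_mat s s" using Wc by (auto simp: minus_carrier_mat)
  have WC1c: "WC - 1\<^sub>m s \<in> carrier_mat s s" using WCc by (auto simp: minus_carrier_mat)
  have hW1: "map_mat complex_of_real (W - 1\<^sub>m s) = WC - 1\<^sub>m s"
    by (rule eq_matI) (use Wc in \<open>auto simp: WC_def\<close>)
  have CHC: "WC ^\<^sub>m p * (WC - 1\<^sub>m s) ^\<^sub>m q = 0\<^sub>m s s"
  proof -
    have "map_mat complex_of_real (W ^\<^sub>m p * (W - 1\<^sub>m s) ^\<^sub>m q)
      = map_mat complex_of_real (W ^\<^sub>m p) * map_mat complex_of_real ((W - 1\<^sub>m s) ^\<^sub>m q)"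
      by (rule of_real_hom.mat_hom_mult[OF pow_carrier_mat[OF Wc] pow_carrier_mat[OF W1c]])
    also have "map_mat complex_of_real (W ^\<^sub>m p) = WC ^\<^sub>m p"
      unfolding WC_def by (rule of_real_hom.mat_hom_pow[OF Wc])
    also have "map_mat complex_of_real ((W - 1\<^sub>m s) ^\<^sub>m q) = (WC - 1\<^sub>m s) ^\<^sub>m q"
      unfolding hW1[symmetric] by (rule of_real_hom.mat_hom_pow[OF W1c])
    finally have "WC ^\<^sub>m p * (WC - 1\<^sub>m s) ^\<^sub>m q = map_mat complex_of_real (0\<^sub>m s s)"
      unfolding CH by simp
    also have "\<dots> = 0\<^sub>m s s" by (rule eq_matI) auto
    finally show ?thesis .
  qed
  obtain xs where cpW: "char_poly WC = (\<Prod>a\<leftarrow>xs. [:-a, 1:])" using char_poly_factorized[OF WCc] by blast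
  have xs01: "x = 0 \<or> x = 1" if x: "x \<in> set xs" for x
  proof -
    have "poly (char_poly WC) x = 0" unfolding cpW by (rule linear_poly_root[OF x])
    hence "eigenvalue WC x" using eigenvalue_root_char_poly[OF WCc] by simp
    then obtain v where ev: "eigenvector WC v x" unfolding eigenvalue_def by blast
    hence v: "v \<in> carrier_vec s" "v \<noteq> 0\<^sub>v s" and Wv: "WC *\<^sub>v v = x \<cdot>\<^sub>v v"
      unfolding eigenvector_def using WCc by auto
    have ev1: "eigenvector (WC - 1\<^sub>m s) v (x - 1)"
      unfolding eigenvector_def
    proof (intro conjI)
      show "v \<in> carrier_vec (dim_row (WC - 1\<^sub>m s))" "v \<noteq> 0\<^sub>v (dim_row (WC - 1\<^sub>m s))" using v WCc by auto
      have "(WC - 1\<^sub>m s) *\<^sub>v v = WC *\<^sub>v v - 1\<^sub>m s *\<^sub>v v"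
        using WCc v by (subst minus_mult_distrib_mat_vec[of _ s s]) auto
      also have "\<dots> = (x - 1) \<cdot>\<^sub>v v" unfolding Wv using v by (intro eq_vecI) (auto simp: algebra_simps)
      finally show "(WC - 1\<^sub>m s) *\<^sub>v v = (x - 1) \<cdot>\<^sub>v v" .
    qed
    have "(WC ^\<^sub>m p * (WC - 1\<^sub>m s) ^\<^sub>m q) *\<^sub>v v = WC ^\<^sub>m p *\<^sub>v ((WC - 1\<^sub>m s) ^\<^sub>m q *\<^sub>v v)"
      using WCc WC1c v by (intro assoc_mult_mat_vec[of _ s s _ s]) auto
    also have "(WC - 1\<^sub>m s) ^\<^sub>m q *\<^sub>v v = (x - 1) ^ q \<cdot>\<^sub>v v" by (rule eigenvector_pow[OF WC1c ev1])
    also have "WC ^\<^sub>m p *\<^sub>v ((x - 1) ^ q \<cdot>\<^sub>v v) = (x - 1) ^ q \<cdot>\<^sub>v (WC ^\<^sub>m p *\<^sub>v v)"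
      using WCc v by (intro mult_mat_vec[of _ s s]) auto
    also have "WC ^\<^sub>m p *\<^sub>v v = x ^ p \<cdot>\<^sub>v v" by (rule eigenvector_pow[OF WCc ev])
    finally have eq: "0\<^sub>m s s *\<^sub>v v = (x - 1) ^ q \<cdot>\<^sub>v (x ^ p \<cdot>\<^sub>v v)" unfolding CHC .
    obtain i where i: "i < s" "v $ i \<noteq> 0" using v by (metis eq_vecI carrier_vecD index_zero_vec)
    have "((x - 1) ^ q \<cdot>\<^sub>v (x ^ p \<cdot>\<^sub>v v)) $ i = 0" unfolding eq[symmetric] using i v by simp
    hence "(x - 1) ^ q * x ^ p = 0" using i v by simp
    thus ?thesis by auto
  qed
  obtain T2 P2 Q2 where sd: "schur_decomposition WC xs = (T2,P2,Q2)"
    by (cases "schur_decomposition WC xs") auto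
  from schur_decomposition[OF WCc cpW sd] have wit: "similar_mat_wit WC T2 P2 Q2"
    and ut: "upper_triangular T2" and dT: "diag_mat T2 = xs" by auto
  from wit WCc have P2c: "P2 \<in> carrier_mat s s" and Q2c: "Q2 \<in> carrier_mat s s" and T2c: "T2 \<in> carrier_mat s s"
    and QP: "Q2 * P2 = 1\<^sub>m s" and WCe: "WC = P2 * T2 * Q2"
    unfolding similar_mat_wit_def Let_def by auto
  have Td: "T2 $$ (i,i) = 0 \<or> T2 $$ (i,i) = 1" if i: "i < s" for i
  proof -
    have "T2 $$ (i,i) = diag_mat T2 ! i" using T2c i unfolding diag_mat_def by simp
    also have "\<dots> \<in> set xs" unfolding dT[symmetric] using T2c i unfolding diag_mat_def by simp
    finally show ?thesis using xs01 by blast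
  qed
  have trm: "tr (WC ^\<^sub>m j) = tr T2" if j: "j \<ge> 1" for j
  proof -
    have "tr (WC ^\<^sub>m j) = tr (P2 * T2 ^\<^sub>m j * Q2)" using similar_mat_wit_pow_id[OF wit] by simp
    also have "\<dots> = tr (T2 ^\<^sub>m j)" using tr_sim[OF P2c _ Q2c QP] T2c by simp
    also have "\<dots> = (\<Sum>i = 0..<s. T2 $$ (i,i) ^ j)" unfolding tr_def using ut_pow[OF T2c ut] T2c by simp
    also have "\<dots> = (\<Sum>i = 0..<s. T2 $$ (i,i))"
    proof (intro sum.cong refl)
      fix i assume "i \<in> {0..<s}"
      thus "T2 $$ (i,i) ^ j = T2 $$ (i,i)" using Td[of i] j by auto
    qed
    also have "\<dots> = tr T2" unfolding tr_def using T2c by simp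
    finally show ?thesis .
  qed
  have htr: "tr (map_mat complex_of_real X) = complex_of_real (tr X)" if "X \<in> carrier_mat s s" for X
    unfolding tr_def using that by simp
  have "complex_of_real (tr (W ^\<^sub>m m)) = tr (WC ^\<^sub>m m)"
    unfolding htr[OF pow_carrier_mat[OF Wc], symmetric] WC_def of_real_hom.mat_hom_pow[OF Wc] ..
  also have "\<dots> = tr WC" using trm[of m] trm[of 1] m WCc by simp
  also have "\<dots> = complex_of_real (tr W)" unfolding WC_def htr[OF Wc, symmetric] ..
  finally show ?thesis by simp
qed



lemma part2:
  fixes M :: "real mat" and k n :: nat
  assumes k: "k \<ge> 2" and n: "n = 2*k+1" and Mc: "M \<in> carrier_mat n n"
    and Mnn: "\<And>i j. i < n \<Longrightarrow> j < n \<Longrightarrow> M $$ (i,j) \<ge> 0"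
    and Md: "\<And>i. i < n \<Longrightarrow> M $$ (i,i) = real k / real (2*k+1)"
    and CHM: "M ^\<^sub>m (k+1) * (M - 1\<^sub>m n) ^\<^sub>m k = 0\<^sub>m n n"
  shows False
proof -
  define \<gamma> where "\<gamma> = real k / real (2*k+1)"
  have g0: "\<gamma> > 0" unfolding \<gamma>_def using k by simp
  define cl where "cl S \<longleftrightarrow> S \<subseteq> {0..<n} \<and> S \<noteq> {} \<and> (\<forall>i\<in>S. \<forall>j<n. M $$ (i,j) \<noteq> 0 \<longrightarrow> j \<in> S)" for S
  have "cl {0..<n}" unfolding cl_def n by auto
  then obtain S where clS: "cl S" and minS: "\<And>S'. cl S' \<Longrightarrow> card S \<le> card S'"
    using ex_has_least_nat[of cl "{0..<n}" card] by blast
  have Sn: "S \<subseteq> {0..<n}" and Sne: "S \<noteq> {}" using clS unfolding cl_def by auto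
  have finS: "finite S" using Sn finite_subset by blast
  define s where "s = card S"
  have s0: "s > 0" unfolding s_def using finS Sne by (simp add: card_gt_0_iff)
  obtain f where f: "bij_betw f {0..<s} S" unfolding s_def using ex_bij_betw_nat_finite[OF finS] by blast
  have clM: "clmat n S M" unfolding clmat_def using clS Mc unfolding cl_def by auto
  define W where "W = restr f s M"
  have Wc: "W \<in> carrier_mat s s" unfolding W_def by simp
  have Wpow: "W ^\<^sub>m m = restr f s (M ^\<^sub>m m)" for m unfolding W_def by (rule restr_pow[OF f clM, symmetric])
  have Wentry: "(W ^\<^sub>m m) $$ (i,j) = (M ^\<^sub>m m) $$ (f i, f j)" if "i < s" "j < s" for m i j
    unfolding Wpow using that by simp
  have fS: "f i \<in> S" "f i < n" if "i < s" for i using bij_f[OF f Sn that] by auto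
  have clM1: "clmat n S (M - 1\<^sub>m n)" by (rule clmat_minus[OF clM clmat_one[OF Sn]])
  have W1: "restr f s (M - 1\<^sub>m n) = W - 1\<^sub>m s"
    unfolding W_def using restr_minus[OF f Sn Mc, of "1\<^sub>m n"] restr_one[OF f Sn, where 'a=real] by simp
  have CHW: "W ^\<^sub>m (k+1) * (W - 1\<^sub>m s) ^\<^sub>m k = 0\<^sub>m s s"
  proof -
    have "restr f s (M ^\<^sub>m (k+1) * (M - 1\<^sub>m n) ^\<^sub>m k) = restr f s (M ^\<^sub>m (k+1)) * restr f s ((M - 1\<^sub>m n) ^\<^sub>m k)"
      by (rule restr_mult[OF f clmat_pow[OF clM]]) (use Mc in \<open>auto simp: minus_carrier_mat\<close>)
    also have "\<dots> = W ^\<^sub>m (k+1) * (W - 1\<^sub>m s) ^\<^sub>m k"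
      unfolding Wpow restr_pow[OF f clM1] W1 ..
    finally have "restr f s (0\<^sub>m n n) = W ^\<^sub>m (k+1) * (W - 1\<^sub>m s) ^\<^sub>m k" unfolding CHM .
    moreover have "restr f s (0\<^sub>m n n) = (0\<^sub>m s s :: real mat)"
      by (rule eq_matI) (auto simp: fS)
    ultimately show ?thesis by simp
  qed
  have Mpnn: "(M ^\<^sub>m m) $$ (i,j) \<ge> 0" if "i < n" "j < n" for m i j
    using nonneg_pow[OF Mc Mnn that] .
  have Mstep: "(M ^\<^sub>m Suc m) $$ (i,j) \<ge> (M ^\<^sub>m m) $$ (i,l) * M $$ (l,j)"
    if "i < n" "j < n" "l < n" for m i j l
    using nonneg_mult[OF pow_carrier_mat[OF Mc] Mc Mpnn Mnn that] by simp
  have persist0: "(M ^\<^sub>m (m + d)) $$ (i,j) > 0" if pos: "(M ^\<^sub>m m) $$ (i,j) > 0" and ij: "i < n" "j < n" for m d i j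
  proof (induct d)
    case 0 thus ?case using pos by simp
  next
    case (Suc d)
    have "M $$ (j,j) > 0" using Md[OF ij(2)] g0 unfolding \<gamma>_def by simp
    hence "(M ^\<^sub>m (m + d)) $$ (i,j) * M $$ (j,j) > 0" using Suc by (intro mult_pos_pos)
    also have "\<dots> \<le> (M ^\<^sub>m Suc (m + d)) $$ (i,j)" by (rule Mstep[OF ij ij(2)])
    finally show ?case by simp
  qed
  have persist: "(M ^\<^sub>m m') $$ (i,j) > 0" if "(M ^\<^sub>m m) $$ (i,j) > 0" "m \<le> m'" "i < n" "j < n" for m m' i j
    using persist0[OF that(1,3,4), of "m' - m"] that(2) by simp
  have reach: "\<exists>m. (M ^\<^sub>m m) $$ (i,j) > 0" if i: "i \<in> S" and j: "j \<in> S" for i j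
  proof -
    have "i < n" using i Sn by auto
    define Rc where "Rc = {j. j < n \<and> (\<exists>m. (M ^\<^sub>m m) $$ (i,j) > 0)}"
    have iRc: "i \<in> Rc" unfolding Rc_def using \<open>i < n\<close> Mc by (auto intro!: exI[of _ 0])
    have clRc: "cl Rc" unfolding cl_def
    proof (intro conjI ballI allI impI)
      show "Rc \<subseteq> {0..<n}" unfolding Rc_def by auto
      show "Rc \<noteq> {}" using iRc by auto
      fix j l assume jR: "j \<in> Rc" and l: "l < n" and Mjl: "M $$ (j,l) \<noteq> 0"
      from jR obtain m where j: "j < n" and pm: "(M ^\<^sub>m m) $$ (i,j) > 0" unfolding Rc_def by auto
      have "M $$ (j,l) > 0" using Mnn[OF j l] Mjl by simp
      hence "(M ^\<^sub>m m) $$ (i,j) * M $$ (j,l) > 0" using pm by simp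
      also have "\<dots> \<le> (M ^\<^sub>m Suc m) $$ (i,l)" by (rule Mstep[OF \<open>i < n\<close> l j])
      finally have "(M ^\<^sub>m Suc m) $$ (i,l) > 0" .
      thus "l \<in> Rc" unfolding Rc_def using l by blast
    qed
    have RcS: "Rc \<subseteq> S"
    proof
      fix j assume "j \<in> Rc"
      then obtain m where j: "j < n" and pm: "(M ^\<^sub>m m) $$ (i,j) > 0" unfolding Rc_def by auto
      show "j \<in> S"
      proof (rule ccontr)
        assume "j \<notin> S"
        hence "(M ^\<^sub>m m) $$ (i,j) = 0" using clmat_pow[OF clM, of m] i j unfolding clmat_def by auto
        thus False using pm by simp
      qed
    qed
    have "Rc = S" using card_seteq[OF finS RcS minS[OF clRc]] .
    thus ?thesis using j unfolding Rc_def by auto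
  qed
  define PP where "PP x m \<longleftrightarrow> fst x < n \<and> snd x < n \<and> (M ^\<^sub>m m) $$ x > 0" for x m
  have "\<exists>m0. \<forall>x\<in>S \<times> S. \<forall>m\<ge>m0. PP x m"
  proof (rule uniform_witness)
    show "finite (S \<times> S)" using finS by simp
    show "\<forall>x\<in>S \<times> S. \<exists>m. PP x m" using reach Sn unfolding PP_def by force
    fix x m m' assume "PP x m" "m \<le> m'"
    thus "PP x m'" using persist[of m "fst x" "snd x" m'] unfolding PP_def by auto
  qed
  then obtain m0 where m0': "\<forall>x\<in>S \<times> S. \<forall>m\<ge>m0. PP x m" by blast
  have m0: "(M ^\<^sub>m m) $$ (i,j) > 0" if "i \<in> S" "j \<in> S" "m \<ge> m0" for i j m
    using m0' that unfolding PP_def by auto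
  have Wpos: "(W ^\<^sub>m m) $$ (i,j) > 0" if "m \<ge> m0" "i < s" "j < s" for m i j
    using m0[OF fS(1)[OF that(2)] fS(1)[OF that(3)] that(1)] that Wentry by simp
  have Wnn: "(W ^\<^sub>m m) $$ (i,j) \<ge> 0" if "i < s" "j < s" for m i j
    using Wentry[OF that] Mpnn fS that by simp
  have trW: "tr W = real s * \<gamma>"
  proof -
    have "tr W = (\<Sum>i = 0..<s. W $$ (i,i))" unfolding tr_def using Wc by simp
    also have "\<dots> = (\<Sum>i = 0..<s. \<gamma>)"
    proof (intro sum.cong refl)
      fix i assume "i \<in> {0..<s}"
      hence i: "i < s" by simp
      have "W $$ (i,i) = M $$ (f i, f i)" unfolding W_def using i by simp
      thus "W $$ (i,i) = \<gamma>" using Md[OF fS(2)[OF i]] unfolding \<gamma>_def by simp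
    qed
    finally show ?thesis by simp
  qed
  define a where "a = tr W"
  have trWm: "tr (W ^\<^sub>m m) = a" if "m \<ge> 1" for m unfolding a_def by (rule eig01[OF Wc CHW that])
  define m1 where "m1 = Suc m0"
  define \<alpha> where "\<alpha> = Min ((\<lambda>(i,j). (W ^\<^sub>m m1) $$ (i,j)) ` ({0..<s} \<times> {0..<s}))"
  have \<alpha>in: "\<alpha> \<in> (\<lambda>(i,j). (W ^\<^sub>m m1) $$ (i,j)) ` ({0..<s} \<times> {0..<s})"
    unfolding \<alpha>_def using s0 by (intro Min_in) auto
  have \<alpha>pos: "\<alpha> > 0" using \<alpha>in Wpos[of m1] unfolding m1_def by auto
  have \<alpha>le: "\<alpha> \<le> (W ^\<^sub>m m1) $$ (i,j)" if "i < s" "j < s" for i j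
    unfolding \<alpha>_def using that by (intro Min_le) auto
  have bnd: "\<bar>(W ^\<^sub>m m) $$ (i,j)\<bar> \<le> a / \<alpha>" if ij: "i < s" "j < s" for m i j
  proof -
    have "(W ^\<^sub>m m) $$ (i,j) * \<alpha> \<le> (W ^\<^sub>m m) $$ (i,j) * (W ^\<^sub>m m1) $$ (j,i)"
      using \<alpha>le[of j i] ij Wnn[OF ij, of m] by (intro mult_left_mono) auto
    also have "\<dots> \<le> (W ^\<^sub>m m * W ^\<^sub>m m1) $$ (i,i)"
      by (rule nonneg_mult[OF pow_carrier_mat[OF Wc] pow_carrier_mat[OF Wc] Wnn Wnn ij(1) ij(1) ij(2)])
    also have "\<dots> = (W ^\<^sub>m (m + m1)) $$ (i,i)" using pow_add_mat[OF Wc, of m m1] by simp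
    also have "\<dots> \<le> (\<Sum>l = 0..<s. (W ^\<^sub>m (m + m1)) $$ (l,l))"
      by (rule member_le_sum) (use ij Wnn in auto)
    also have "\<dots> = tr (W ^\<^sub>m (m + m1))" unfolding tr_def using Wc by simp
    also have "\<dots> = a" using trWm[of "m + m1"] unfolding m1_def by simp
    finally have "(W ^\<^sub>m m) $$ (i,j) \<le> a / \<alpha>" using \<alpha>pos by (simp add: pos_le_divide_eq)
    thus ?thesis using Wnn[OF ij] by simp
  qed
  have stab: "W ^\<^sub>m Suc (k+1) = W ^\<^sub>m (k+1)" by (rule bounded_stab[OF Wc bnd CHW])
  have stabd: "W ^\<^sub>m ((k+1) + d) = W ^\<^sub>m (k+1)" for d
  proof (induct d)
    case 0 thus ?case by simp
  next
    case (Suc d)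
    have "W ^\<^sub>m ((k+1) + Suc d) = W ^\<^sub>m ((k+1) + d) * W" by simp
    also have "\<dots> = W ^\<^sub>m Suc (k+1)" using Suc by simp
    finally show ?case using stab by simp
  qed
  define B0 where "B0 = (k+1) + m1"
  define E where "E = W ^\<^sub>m B0"
  have Ec: "E \<in> carrier_mat s s" unfolding E_def using Wc by simp
  have EE: "E * E = E"
  proof -
    have "E * E = W ^\<^sub>m (B0 + B0)" unfolding E_def using pow_add_mat[OF Wc, of B0 B0] by simp
    also have "\<dots> = W ^\<^sub>m (k+1)" using stabd[of "m1 + B0"] unfolding B0_def by (simp add: add.assoc)
    also have "\<dots> = E" unfolding E_def B0_def using stabd[of m1] by simp
    finally show ?thesis .
  qed
  have Epos: "E $$ (i,j) > 0" if "i < s" "j < s" for i j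
    unfolding E_def using Wpos[OF _ that, of B0] unfolding B0_def m1_def by simp
  have "tr E = 1" by (rule pos_idem_tr[OF Ec Epos EE s0])
  moreover have "tr E = a" unfolding E_def using trWm[of B0] unfolding B0_def by simp
  ultimately have "real s * \<gamma> = 1" using trW unfolding a_def by simp
  hence "real s * real k = real (2*k+1)" unfolding \<gamma>_def by (simp add: field_simps)
  hence sk: "s * k = 2 * k + 1" by (metis of_nat_eq_iff of_nat_mult)
  show False
  proof (cases "s \<le> 2")
    case True
    hence "s * k \<le> 2 * k" by simp
    thus False using sk by simp
  next
    case False
    hence "3 * k \<le> s * k" by simp
    thus False using sk k by simp
  qed
qed



lemma nonreal:
  fixes k :: nat
  assumes k: "k \<ge> 2" and R: "realizable (sigma_n k)"
  shows False
proof -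
  define n where "n = 2 * k + 1"
  define c :: real where "c = real k / real (k+1)"
  have c0: "c > 0" "c < 1" using k unfolding c_def by (auto simp: field_simps)
  have sz: "size (sigma_n k) = n" unfolding sigma_n_def n_def by simp
  from R obtain A :: "real mat" where A: "A \<in> carrier_mat n n"
    and Ann: "\<And>i j. i < n \<Longrightarrow> j < n \<Longrightarrow> A $$ (i,j) \<ge> 0"
    and cp: "char_poly (map_mat complex_of_real A) = (\<Prod>x\<in>#sigma_n k. [:-x, 1:])"
    unfolding realizable_def sz by blast
  define AC where "AC = map_mat complex_of_real A"
  have ACc: "AC \<in> carrier_mat n n" using A unfolding AC_def by simp
  define es :: "complex list" where "es = replicate (k+1) (- complex_of_real c) @ replicate k 1"
  have ofc: "complex_of_real c = of_nat k / of_nat (k+1)" unfolding c_def by simp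
  have mes: "sigma_n k = mset es" unfolding sigma_n_def es_def ofc by (simp add: add.commute)
  have cp2: "char_poly AC = (\<Prod>a\<leftarrow>es. [:-a, 1:])"
    using cp unfolding AC_def mes by (metis mset_map prod_mset_prod_list)
  obtain B P Q where sd: "schur_decomposition AC es = (B,P,Q)" by (cases "schur_decomposition AC es") auto
  from schur_decomposition[OF ACc cp2 sd] have wit: "similar_mat_wit AC B P Q"
    and utB: "upper_triangular B" and dB: "diag_mat B = es" by auto
  from wit ACc have Pc: "P \<in> carrier_mat n n" and Qc: "Q \<in> carrier_mat n n" and Bc: "B \<in> carrier_mat n n"
    and PQ: "P * Q = 1\<^sub>m n" and QP: "Q * P = 1\<^sub>m n" and ACe: "AC = P * B * Q"
    unfolding similar_mat_wit_def Let_def by auto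
  have Bd: "B $$ (i,i) = (if i < k+1 then - complex_of_real c else 1)" if i: "i < n" for i
  proof -
    have "B $$ (i,i) = diag_mat B ! i" using Bc i unfolding diag_mat_def by simp
    also have "\<dots> = es ! i" by (simp add: dB)
    also have "\<dots> = (if i < k+1 then replicate (k+1) (- complex_of_real c) ! i else replicate k 1 ! (i - (k+1)))"
      unfolding es_def by (simp only: nth_append length_replicate)
    also have "\<dots> = (if i < k+1 then - complex_of_real c else 1)"
      using i unfolding n_def by (auto simp del: replicate.simps)
    finally show ?thesis .
  qed
  have "tr AC = tr B" using tr_sim[OF Pc Bc Qc QP] ACe by simp
  also have "tr B = (\<Sum>i\<in>set [0..<n]. B $$ (i,i))" unfolding tr_def using Bc by simp
  also have "\<dots> = sum_list (map (\<lambda>i. B $$ (i,i)) [0..<n])"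
    by (rule sum_list_distinct_conv_sum_set[symmetric]) simp
  also have "\<dots> = sum_list (diag_mat B)" unfolding diag_mat_def using Bc by simp
  also have "\<dots> = 0" unfolding dB es_def by (rule sum_es[OF c_def])
  finally have trAC: "tr AC = 0" .
  have "tr AC = complex_of_real (\<Sum>i = 0..<n. A $$ (i,i))" unfolding tr_def AC_def using A by simp
  hence sA: "(\<Sum>i = 0..<n. A $$ (i,i)) = 0" using trAC by (metis of_real_eq_0_iff)
  have Adiag: "A $$ (i,i) = 0" if "i < n" for i
    using sA Ann that by (subst (asm) sum_nonneg_eq_0_iff) auto
  define lam where "lam = 1 + c"
  have lam0: "lam > 0" using c0 unfolding lam_def by simp
  define M :: "real mat" where "M = mat n n (\<lambda>(i,j). (A $$ (i,j) + (if i = j then c else 0)) / lam)"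
  have Mc: "M \<in> carrier_mat n n" unfolding M_def by simp
  define MC where "MC = map_mat complex_of_real M"
  have MCc: "MC \<in> carrier_mat n n" unfolding MC_def using Mc by simp
  define a where "a = 1 / complex_of_real lam"
  define B' where "B' = a \<cdot>\<^sub>m (B + complex_of_real c \<cdot>\<^sub>m 1\<^sub>m n)"
  have B'c: "B' \<in> carrier_mat n n" unfolding B'_def using Bc by simp
  have B'e: "B' $$ (i,j) = a * (B $$ (i,j) + (if i = j then complex_of_real c else 0))" if "i < n" "j < n" for i j
    unfolding B'_def using that Bc by simp
  have MC_eq: "MC = a \<cdot>\<^sub>m (AC + complex_of_real c \<cdot>\<^sub>m 1\<^sub>m n)"
    using carrier_matD[OF A] by (intro eq_matI) (auto simp: MC_def M_def AC_def a_def divide_inverse)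
  have c1c: "complex_of_real c \<cdot>\<^sub>m 1\<^sub>m n \<in> carrier_mat n n" by simp
  have "P * B' * Q = (a \<cdot>\<^sub>m (P * (B + complex_of_real c \<cdot>\<^sub>m 1\<^sub>m n))) * Q"
    unfolding B'_def using Pc Bc by (subst mult_smult_distrib[of _ n n]) auto
  also have "\<dots> = a \<cdot>\<^sub>m (P * (B + complex_of_real c \<cdot>\<^sub>m 1\<^sub>m n) * Q)"
    using Pc Bc Qc by (subst mult_smult_assoc_mat[of _ n n]) auto
  also have "P * (B + complex_of_real c \<cdot>\<^sub>m 1\<^sub>m n) = P * B + complex_of_real c \<cdot>\<^sub>m P"
    using Pc Bc by (subst mult_add_distrib_mat[of _ n n]) (auto simp: mult_smult_distrib[of _ n n])
  also have "(P * B + complex_of_real c \<cdot>\<^sub>m P) * Q = P * B * Q + complex_of_real c \<cdot>\<^sub>m (P * Q)"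
    using Pc Bc Qc by (subst add_mult_distrib_mat[of _ n n]) (auto simp: mult_smult_assoc_mat[of _ n n])
  also have "\<dots> = AC + complex_of_real c \<cdot>\<^sub>m 1\<^sub>m n" using ACe PQ by simp
  finally have MCe: "MC = P * B' * Q" using MC_eq by simp
  have utB': "upper_triangular B'"
  proof (rule upper_triangularI)
    fix i j assume ij: "j < i" "i < dim_row B'"
    hence "i < n" "j < n" using B'c by auto
    thus "B' $$ (i,j) = 0" using B'e upper_triangularD[OF utB, of j i] ij Bc by auto
  qed
  have B'd0: "B' $$ (i,i) = 0" if "i < k+1" for i
    using B'e[of i i] Bd[of i] that unfolding n_def by auto
  have B'd1: "B' $$ (i,i) = 1" if "k+1 \<le> i" "i < n" for i
  proof -
    have "B' $$ (i,i) = a * (1 + complex_of_real c)" using B'e[of i i] Bd[of i] that by auto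
    also have "\<dots> = 1" unfolding a_def lam_def using lam0 unfolding lam_def
      by (simp add: field_simps) (metis of_real_1 of_real_add of_real_eq_0_iff order_less_irrefl)
    finally show ?thesis .
  qed
  have nk: "n - (k+1) = k" unfolding n_def by simp
  have CHB: "B' ^\<^sub>m (k+1) * (B' - 1\<^sub>m n) ^\<^sub>m k = 0\<^sub>m n n"
    using tri_CH[OF B'c utB', of "k+1"] B'd0 B'd1 unfolding nk using nk by (auto simp: n_def)
  have B'1c: "B' - 1\<^sub>m n \<in> carrier_mat n n" using B'c by (auto simp: minus_carrier_mat)
  have witM: "similar_mat_wit MC B' P Q"
    unfolding similar_mat_wit_def Let_def using MCc B'c Pc Qc PQ QP MCe by auto
  have MC1: "MC - 1\<^sub>m n = P * (B' - 1\<^sub>m n) * Q"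
  proof -
    have "P * (B' - 1\<^sub>m n) * Q = (P * B' - P) * Q" using Pc B'c by (subst mult_minus_distrib_mat[of _ n n]) auto
    also have "\<dots> = P * B' * Q - P * Q" using Pc B'c Qc by (subst minus_mult_distrib_mat[of _ n n]) auto
    finally show ?thesis using MCe PQ by simp
  qed
  have witM1: "similar_mat_wit (MC - 1\<^sub>m n) (B' - 1\<^sub>m n) P Q"
    unfolding similar_mat_wit_def Let_def using MCc B'1c Pc Qc PQ QP MC1 by (auto simp: minus_carrier_mat)
  have "MC ^\<^sub>m (k+1) * (MC - 1\<^sub>m n) ^\<^sub>m k = (P * B' ^\<^sub>m (k+1) * Q) * (P * (B' - 1\<^sub>m n) ^\<^sub>m k * Q)"
    by (simp only: similar_mat_wit_pow_id[OF witM] similar_mat_wit_pow_id[OF witM1])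
  also have "\<dots> = P * (B' ^\<^sub>m (k+1) * (B' - 1\<^sub>m n) ^\<^sub>m k) * Q"
    using B'c B'1c by (intro sim_prod[OF Pc Qc _ _ QP]) auto
  also have "\<dots> = 0\<^sub>m n n" using CHB Pc Qc by simp
  finally have CHMC: "MC ^\<^sub>m (k+1) * (MC - 1\<^sub>m n) ^\<^sub>m k = 0\<^sub>m n n" .
  have M1c: "M - 1\<^sub>m n \<in> carrier_mat n n" using Mc by (auto simp: minus_carrier_mat)
  have hM1: "map_mat complex_of_real (M - 1\<^sub>m n) = MC - 1\<^sub>m n"
    by (rule eq_matI) (use Mc in \<open>auto simp: MC_def\<close>)
  have "map_mat complex_of_real (M ^\<^sub>m (k+1) * (M - 1\<^sub>m n) ^\<^sub>m k)
      = map_mat complex_of_real (M ^\<^sub>m (k+1)) * map_mat complex_of_real ((M - 1\<^sub>m n) ^\<^sub>m k)"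
    by (rule of_real_hom.mat_hom_mult[OF pow_carrier_mat[OF Mc] pow_carrier_mat[OF M1c]])
  also have "map_mat complex_of_real (M ^\<^sub>m (k+1)) = MC ^\<^sub>m (k+1)"
    unfolding MC_def by (rule of_real_hom.mat_hom_pow[OF Mc])
  also have "map_mat complex_of_real ((M - 1\<^sub>m n) ^\<^sub>m k) = (MC - 1\<^sub>m n) ^\<^sub>m k"
    unfolding hM1[symmetric] by (rule of_real_hom.mat_hom_pow[OF M1c])
  also have "MC ^\<^sub>m (k+1) * (MC - 1\<^sub>m n) ^\<^sub>m k = 0\<^sub>m n n" by (rule CHMC)
  also have "\<dots> = map_mat complex_of_real (0\<^sub>m n n)" by (rule eq_matI) auto
  finally have CHM: "M ^\<^sub>m (k+1) * (M - 1\<^sub>m n) ^\<^sub>m k = 0\<^sub>m n n" by (rule of_real_hom.mat_hom_inj)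
  have Mnn: "M $$ (i,j) \<ge> 0" if "i < n" "j < n" for i j
    unfolding M_def using that Ann[OF that] c0 lam0 by auto
  have Md: "M $$ (i,i) = real k / real (2*k+1)" if "i < n" for i
  proof -
    have "M $$ (i,i) = c / lam" unfolding M_def using that Adiag[OF that] by simp
    also have "\<dots> = real k / real (2*k+1)"
    proof -
      have l: "lam = real (2*k+1) / real (k+1)" unfolding lam_def c_def by (simp add: field_simps)
      have "c / lam = (real k / real (k+1)) * (real (k+1) / real (2*k+1))" unfolding l c_def by simp
      also have "\<dots> = real k / real (2*k+1)" by simp
      finally show ?thesis .
    qed
    finally show ?thesis .
  qed
  show False by (rule part2[OF k n_def Mc Mnn Md CHM])
qed


theorem theorem2:
  fixes k :: nat
  assumes "k \<ge> 2"
  shows "size (sigma_n k) = 2 * k + 1 \<and> sum_mset (sigma_n k) = 0 \<and> \<not> realizable (sigma_n k)"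
proof (intro conjI)
  show "size (sigma_n k) = 2 * k + 1" unfolding sigma_n_def by simp
  have "(of_nat (k+1) :: complex) \<noteq> 0" by (metis of_nat_eq_0_iff add_is_0 one_neq_zero)
  thus "sum_mset (sigma_n k) = 0" unfolding sigma_n_def by (simp add: field_simps)
  show "\<not> realizable (sigma_n k)" using nonreal[OF assms] by blast
qed

end
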